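(* Fix $\Delta>1$. Consider a matrix $M\in\mathbb{F}_2^{m\times n}$ that can be used for $\Delta$-approximation of $d=\|\mathbf{x}\|_0$ in the group testing model with only the trivial upper bound $D=n$ on $d$ (i.e. for all $\mathbf{x}\in\mathbb{F}_2^n$). Then for large $n$ it is necessary that $$m\ge n\left(h\!\left(\frac{1}{\Delta^4}\right)-\frac{1}{\Delta^2}h\!\left(\frac{1}{\Delta^2}\right)\right)=\Omega(n),$$ where $h$ is the binary entropy function.
   Context: $\|\mathbf{x}\|_0$ is the number of nonzero entries of $\mathbf{x}$. Group testing model: $(M\odot\mathbf{x})_i=\bigvee_{j:M_{ij}=1}\mathbf{x}_j$. $M$ can be used for $\Delta$-approximation if some deterministic decoder, given only $M\odot\mathbf{x}$, outputs $\hat d$ with $\frac1\Delta\le\hat d/d\le\Delta$ for every admissible $\mathbf{x}$. $h(x)=-x\log_2 x-(1-x)\log_2(1-x)$. *)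

theory Defs
  imports Complex_Main
begin

definition bin_entropy :: "real \<Rightarrow> real" where
  "bin_entropy x = - x * log 2 x - (1 - x) * log 2 (1 - x)"

text \<open>An m x n matrix over F2 is a boolean function on indices (i < m, j < n);
  a vector x in F2^n is a boolean function, only entries j < n matter.\<close>

definition gt_outcome :: "nat \<Rightarrow> nat \<Rightarrow> (nat \<Rightarrow> nat \<Rightarrow> bool) \<Rightarrow> (nat \<Rightarrow> bool) \<Rightarrow> (nat \<Rightarrow> bool)" where
  "gt_outcome m n M x = (\<lambda>i. i < m \<and> (\<exists>j<n. M i j \<and> x j))"

definition hweight :: "nat \<Rightarrow> (nat \<Rightarrow> bool) \<Rightarrow> nat" where
  "hweight n x = card {j. j < n \<and> x j}"

text \<open>M can be used for Delta-approximation of the number of nonzero entries,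
  for all x in F2^n (trivial upper bound D = n); the ratio condition is only
  meaningful for d > 0.\<close>
definition delta_approx :: "real \<Rightarrow> nat \<Rightarrow> nat \<Rightarrow> (nat \<Rightarrow> nat \<Rightarrow> bool) \<Rightarrow> bool" where
  "delta_approx \<Delta> m n M \<longleftrightarrow>
     (\<exists>dec :: (nat \<Rightarrow> bool) \<Rightarrow> real. \<forall>x. hweight n x > 0 \<longrightarrow>
        1 / \<Delta> \<le> dec (gt_outcome m n M x) / real (hweight n x) \<and>
        dec (gt_outcome m n M x) / real (hweight n x) \<le> \<Delta>)"

end

theory Submission imports Defs begin
lemma gibbs:
  fixes a q :: real
  assumes a0: "0 < a" and a1: "a < 1" and q0: "0 < q"
  shows "bin_entropy a + a * log 2 q \<le> log 2 (1 + q)"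
proof -
  define x1 where "x1 = q / (a * (1 + q))"
  define x2 where "x2 = 1 / ((1 - a) * (1 + q))"
  have x1p: "x1 > 0" and x2p: "x2 > 0" using assms by (auto simp: x1_def x2_def)
  have e1: "ln x1 = ln q - ln a - ln (1 + q)" using assms unfolding x1_def
    by (simp add: ln_div ln_mult)
  have e2: "ln x2 = - ln (1 - a) - ln (1 + q)" using assms unfolding x2_def
    by (simp add: ln_div ln_mult)
  have "a * ln x1 \<le> a * (x1 - 1)" using ln_le_minus_one[OF x1p] a0 by (simp add: mult_left_mono)
  moreover have "(1 - a) * ln x2 \<le> (1 - a) * (x2 - 1)" using ln_le_minus_one[OF x2p] a1 by (simp add: mult_left_mono)
  moreover have "a * (x1 - 1) + (1 - a) * (x2 - 1) = 0"
  proof -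
    have "a * x1 = (a * q) / (a * (1 + q))" unfolding x1_def by simp
    also have "\<dots> = q / (1 + q)" using a0 by simp
    moreover have "(1 - a) * x2 = 1 / (1 + q)"
    proof -
      have "(1 - a) * x2 = ((1 - a) * 1) / ((1 - a) * (1 + q))" unfolding x2_def by simp
      also have "\<dots> = 1 / (1 + q)" using a1 by (subst mult_divide_mult_cancel_left) auto
      finally show ?thesis .
    qed
    moreover have "q / (1 + q) + 1 / (1 + q) = 1" using q0 by (simp add: field_simps)
    ultimately show ?thesis by (simp add: algebra_simps)
  qed
  ultimately have "a * ln x1 + (1 - a) * ln x2 \<le> 0" by linarith
  hence L: "- a * ln a - (1 - a) * ln (1 - a) + a * ln q \<le> ln (1 + q)"
    unfolding e1 e2 by (simp add: algebra_simps)
  have "(- a * ln a - (1 - a) * ln (1 - a) + a * ln q) / ln 2 \<le> ln (1 + q) / ln 2"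
    using L by (simp add: divide_right_mono)
  thus ?thesis unfolding bin_entropy_def log_def by (simp add: add_divide_distrib diff_divide_distrib)
qed

lemma logq:
  fixes t :: real
  assumes t1: "t > 1"
  shows "1 / t * bin_entropy (1 / t) = - (1 / t^2) * log 2 ((t / (t - 1) - 1) / (t / (t - 1)) powr t)"
proof -
  have tp: "t > 0" "t - 1 > 0" using t1 by auto
  have A: "ln ((t / (t - 1) - 1) / (t / (t - 1)) powr t) = - ln (t - 1) - t * (ln t - ln (t - 1))"
  proof -
    have m1: "t / (t - 1) - 1 = 1 / (t - 1)" using tp by (simp add: field_simps)
    have mp: "t / (t - 1) > 0" using tp by simp
    have "ln ((t / (t - 1)) powr t) = t * ln (t / (t - 1))" using mp by (simp add: ln_powr)
    also have "ln (t / (t - 1)) = ln t - ln (t - 1)" using tp by (simp add: ln_div)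
    finally have p: "ln ((t / (t - 1)) powr t) = t * (ln t - ln (t - 1))" .
    have "ln ((t / (t - 1) - 1) / (t / (t - 1)) powr t) = ln (1 / (t - 1)) - ln ((t / (t - 1)) powr t)"
      unfolding m1 using tp mp by (intro ln_divide_pos) auto
    also have "ln (1 / (t - 1)) = - ln (t - 1)" using tp by (simp add: ln_div)
    finally show ?thesis unfolding p .
  qed
  have B: "ln (1 - 1 / t) = ln (t - 1) - ln t"
  proof -
    have "1 - 1 / t = (t - 1) / t" using tp by (simp add: field_simps)
    thus ?thesis using tp by (simp add: ln_divide_pos)
  qed
  have C: "ln (1 / t) = - ln t" using tp by (simp add: ln_div)
  show ?thesis unfolding bin_entropy_def log_def A B C using tp
    by (simp add: field_simps power2_eq_square)
qed
lemma pow_sum: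
  fixes a :: real
  assumes "finite K"
  shows "(\<Sum>B\<in>Pow K. a ^ card B) = (1 + a) ^ card K"
  using assms
proof (induction K rule: finite_induct)
  case empty
  then show ?case by simp
next
  case (insert x F)
  have disj: "Pow F \<inter> insert x ` Pow F = {}" using insert by auto
  have inj: "inj_on (insert x) (Pow F)" using insert
    by (smt (verit, best) PowD inj_onI insert_ident subsetD)
  have "(\<Sum>B\<in>Pow (insert x F). a ^ card B) = (\<Sum>B\<in>Pow F. a ^ card B) + (\<Sum>B\<in>insert x ` Pow F. a ^ card B)"
    unfolding Pow_insert using insert disj by (intro sum.union_disjoint) auto
  also have "(\<Sum>B\<in>insert x ` Pow F. a ^ card B) = (\<Sum>B\<in>Pow F. a ^ card (insert x B))"
    using inj by (simp add: sum.reindex)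
  also have "\<dots> = (\<Sum>B\<in>Pow F. a * a ^ card B)"
  proof (rule sum.cong)
    fix B assume "B \<in> Pow F"
    hence "finite B" "x \<notin> B" using insert finite_subset by auto
    thus "a ^ card (insert x B) = a * a ^ card B" by simp
  qed simp
  also have "\<dots> = a * (1 + a) ^ card F" using insert by (simp add: sum_distrib_left[symmetric] insert.IH)
  finally show ?case using insert by (simp add: algebra_simps)
qed

lemma weight_bound:
  fixes \<mu> q t :: real
  assumes mu: "\<mu> > 1" and q0: "q \<ge> 0" and qmu: "q * \<mu> powr t = \<mu> - 1"
    and fin: "finite K" and FK: "F \<subseteq> Pow K - {{}}"
    and rat: "\<forall>B\<in>F. real (card K) \<le> t * real (card B)"
  shows "(\<Sum>B\<in>F. q ^ card B) \<le> 1 - 1 / \<mu> ^ card K"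
proof -
  have mp: "\<mu> powr t > 0" using mu by simp
  have step: "q ^ card B * \<mu> ^ card K \<le> (\<mu> - 1) ^ card B" if "B \<in> F" for B
  proof -
    have "\<mu> ^ card K = \<mu> powr real (card K)" using mu by (simp add: powr_realpow)
    also have "\<dots> \<le> \<mu> powr (t * real (card B))" using rat that mu by (intro powr_mono) auto
    also have "\<dots> = (\<mu> powr t) powr real (card B)" by (simp add: powr_powr)
    also have "\<dots> = (\<mu> powr t) ^ card B" using mp by (simp add: powr_realpow)
    finally have "\<mu> ^ card K \<le> (\<mu> powr t) ^ card B" .
    hence "q ^ card B * \<mu> ^ card K \<le> q ^ card B * (\<mu> powr t) ^ card B"
      using q0 by (intro mult_left_mono) auto
    also have "\<dots> = (\<mu> - 1) ^ card B" using qmu by (simp add: power_mult_distrib[symmetric])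
    finally show ?thesis .
  qed
  have finF: "finite F" using FK fin by (meson finite_Diff finite_Pow_iff finite_subset)
  have "(\<Sum>B\<in>F. q ^ card B) * \<mu> ^ card K = (\<Sum>B\<in>F. q ^ card B * \<mu> ^ card K)"
    by (simp add: sum_distrib_right)
  also have "\<dots> \<le> (\<Sum>B\<in>F. (\<mu> - 1) ^ card B)" using step by (intro sum_mono) auto
  also have "\<dots> \<le> (\<Sum>B\<in>Pow K - {{}}. (\<mu> - 1) ^ card B)"
    using FK fin mu by (intro sum_mono2) auto
  also have "\<dots> = (\<Sum>B\<in>Pow K. (\<mu> - 1) ^ card B) - 1"
    using fin by (subst sum_diff1) auto
  also have "\<dots> = \<mu> ^ card K - 1" using pow_sum[OF fin, of "\<mu> - 1"] by simp
  finally have "(\<Sum>B\<in>F. q ^ card B) * \<mu> ^ card K \<le> \<mu> ^ card K - 1" .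
  moreover have "\<mu> ^ card K > 0" using mu by simp
  ultimately have "(\<Sum>B\<in>F. q ^ card B) \<le> (\<mu> ^ card K - 1) / \<mu> ^ card K"
    by (simp add: pos_le_divide_eq)
  also have "\<dots> = 1 - 1 / \<mu> ^ card K" using \<open>\<mu> ^ card K > 0\<close> by (metis diff_divide_distrib less_irrefl divide_self)
  finally show ?thesis .
qed
theorem corollary1:
  fixes \<Delta> :: real
  assumes "\<Delta> > 1"
  shows "\<exists>N. \<forall>n \<ge> N. \<forall>m M. delta_approx \<Delta> m n M \<longrightarrow>
           real m \<ge> real n * (bin_entropy (1 / \<Delta> ^ 4) - 1 / \<Delta> ^ 2 * bin_entropy (1 / \<Delta> ^ 2))"
proof -
  define t where "t = \<Delta> ^ 2"
  have t1: "t > 1" using assms unfolding t_def by (simp add: one_less_power)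
  define \<mu> where "\<mu> = t / (t - 1)"
  have mu1: "\<mu> > 1" using t1 unfolding \<mu>_def by (simp add: field_simps)
  define q where "q = (\<mu> - 1) / \<mu> powr t"
  have q0: "q > 0" using mu1 unfolding q_def by simp
  have qmu: "q * \<mu> powr t = \<mu> - 1" using mu1 unfolding q_def by simp
  define target where "target = bin_entropy (1 / \<Delta> ^ 4) - 1 / \<Delta> ^ 2 * bin_entropy (1 / \<Delta> ^ 2)"
  have ent: "target \<le> log 2 (1 + q)"
  proof -
    have d4: "\<Delta> ^ 4 = t ^ 2" unfolding t_def by simp
    have "target = bin_entropy (1 / t ^ 2) + (1 / t ^ 2) * log 2 q"
      unfolding target_def d4 t_def[symmetric] logq[OF t1] q_def \<mu>_def by simp
    also have "\<dots> \<le> log 2 (1 + q)"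
    proof (rule gibbs)
      show "0 < 1 / t ^ 2" using t1 by simp
      show "1 / t ^ 2 < 1" using t1 by (simp add: one_less_power)
    qed (rule q0)
    finally show ?thesis .
  qed
  show ?thesis
  proof (rule exI[of _ "nat \<lceil>t * \<mu> powr t\<rceil>"], intro allI impI)
    fix n m M
    assume nN: "nat \<lceil>t * \<mu> powr t\<rceil> \<le> n" and da: "delta_approx \<Delta> m n M"
    have nbig: "t * \<mu> powr t \<le> real n" using nN by linarith
    obtain dec where dec: "\<forall>x. hweight n x > 0 \<longrightarrow>
        1 / \<Delta> \<le> dec (gt_outcome m n M x) / real (hweight n x) \<and>
        dec (gt_outcome m n M x) / real (hweight n x) \<le> \<Delta>"
      using da unfolding delta_approx_def by blast
    define oc where "oc B = gt_outcome m n M (\<lambda>j. j \<in> B)" for B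
    have hw: "hweight n (\<lambda>j. j \<in> B) = card B" if "B \<subseteq> {..<n}" for B
    proof -
      have "{j. j < n \<and> j \<in> B} = B" using that by auto
      thus ?thesis unfolding hweight_def by simp
    qed
    have ratio: "real (card A) \<le> t * real (card B)"
      if A: "A \<subseteq> {..<n}" "A \<noteq> {}" and B: "B \<subseteq> {..<n}" "B \<noteq> {}" and e: "oc A = oc B" for A B
    proof -
      have fA: "finite A" and fB: "finite B" using A B finite_subset by blast+
      have cA: "card A > 0" and cB: "card B > 0" using fA fB A B by auto
      have "1 / \<Delta> \<le> dec (oc A) / real (card A)"
        using dec[rule_format, of "\<lambda>j. j \<in> A"] hw[OF A(1)] cA by (auto simp: oc_def)
      hence d1: "real (card A) \<le> \<Delta> * dec (oc A)" using cA assms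
        by (simp add: field_simps)
      have "dec (oc B) / real (card B) \<le> \<Delta>"
        using dec[rule_format, of "\<lambda>j. j \<in> B"] hw[OF B(1)] cB by (auto simp: oc_def)
      hence d2: "dec (oc A) \<le> \<Delta> * real (card B)" using cB e by (simp add: field_simps)
      have "\<Delta> * dec (oc A) \<le> \<Delta> * (\<Delta> * real (card B))" using d2 assms by (intro mult_left_mono) auto
      with d1 show ?thesis unfolding t_def by (simp add: power2_eq_square)
    qed
    have un: "oc (A \<union> B) = (\<lambda>i. oc A i \<or> oc B i)" for A B
      unfolding oc_def gt_outcome_def by auto
    define U where "U = Pow {..<n} - {{}}"
    define F where "F y = {B\<in>U. oc B = y}" for y
    have finU: "finite U" unfolding U_def by simp
    have Kex: "\<exists>K. K \<in> F y \<and> (\<forall>B\<in>F y. B \<subseteq> K)" if y: "y \<in> oc ` U" for y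
    proof -
      have finF: "finite (F y)" using finU unfolding F_def by simp
      have neF: "F y \<noteq> {}" using y unfolding F_def by auto
      define c where "c = Max (card ` F y)"
      have "c \<in> card ` F y" unfolding c_def using finF neF by (intro Max_in) auto
      then obtain K where K: "K \<in> F y" "card K = c" by auto
      have "B \<subseteq> K" if B: "B \<in> F y" for B
      proof -
        have "B \<union> K \<in> F y" using B K un unfolding F_def U_def by auto
        hence "card (B \<union> K) \<le> c" unfolding c_def using finF by (intro Max_ge) auto
        moreover have "B \<union> K \<subseteq> {..<n}" using B K unfolding F_def U_def by auto
        hence "finite (B \<union> K)" by (rule finite_subset[OF _ finite_lessThan])
        ultimately have "K = B \<union> K" using K by (intro card_seteq) auto
        thus ?thesis by blast
      qed
      with K show ?thesis by blast
    qed
    then obtain K where K: "\<And>y. y \<in> oc ` U \<Longrightarrow> K y \<in> F y \<and> (\<forall>B\<in>F y. B \<subseteq> K y)"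
      by metis
    have FU: "F y \<subseteq> U" for y unfolding F_def by auto
    have inner: "(\<Sum>B\<in>F y. q ^ card B) \<le> 1 - 1 / \<mu> ^ card (K y)" if y: "y \<in> oc ` U" for y
    proof (rule weight_bound[OF mu1 _ qmu])
      show "0 \<le> q" using q0 by simp
      have KU: "K y \<in> U" using K[OF y] FU by blast
      have "K y \<subseteq> {..<n}" using KU unfolding U_def by blast
      thus "finite (K y)" by (rule finite_subset[OF _ finite_lessThan])
      show "F y \<subseteq> Pow (K y) - {{}}" using K[OF y] FU unfolding U_def by blast
      show "\<forall>B\<in>F y. real (card (K y)) \<le> t * real (card B)"
      proof
        fix B assume B: "B \<in> F y"
        have "B \<in> U" "oc B = y" "oc (K y) = y" using B K[OF y] unfolding F_def by auto
        thus "real (card (K y)) \<le> t * real (card B)" using KU unfolding U_def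
          by (intro ratio) auto
      qed
    qed
    have total: "(\<Sum>B\<in>U. q ^ card B) = (1 + q) ^ n - 1"
    proof -
      have "(\<Sum>B\<in>Pow {..<n}. q ^ card B) = (1 + q) ^ n" using pow_sum[of "{..<n}" q] by simp
      thus ?thesis unfolding U_def by (subst sum_diff1) auto
    qed
    have group: "(\<Sum>B\<in>U. q ^ card B) = (\<Sum>y\<in>oc ` U. \<Sum>B\<in>F y. q ^ card B)"
      unfolding F_def by (rule sum.image_gen[OF finU])
    define S where "S = (\<lambda>j. oc {j}) ` {..<n}"
    have SU: "S \<subseteq> oc ` U" unfolding S_def U_def by auto
    have singK: "{j} \<in> F (oc {j})" if "j < n" for j using that unfolding F_def U_def by auto
    have Ksmall: "real (card (K y)) \<le> t" if y: "y \<in> S" for y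
    proof -
      obtain j where j: "j < n" "y = oc {j}" using y unfolding S_def by auto
      have yU: "y \<in> oc ` U" using y SU by auto
      have "K y \<in> U" "oc (K y) = y" using K[OF yU] unfolding F_def by auto
      hence "real (card (K y)) \<le> t * real (card {j})" using j unfolding U_def
        by (intro ratio) auto
      thus ?thesis by simp
    qed
    define c0 where "c0 = 1 / \<mu> powr t"
    have c0p: "c0 > 0" unfolding c0_def using mu1 by simp
    have inner2: "(\<Sum>B\<in>F y. q ^ card B) \<le> 1 - (if y \<in> S then c0 else 0)" if y: "y \<in> oc ` U" for y
    proof (cases "y \<in> S")
      case True
      have "\<mu> ^ card (K y) = \<mu> powr real (card (K y))" using mu1 by (simp add: powr_realpow)
      also have "\<dots> \<le> \<mu> powr t" using Ksmall[OF True] mu1 by (intro powr_mono) auto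
      finally have "c0 \<le> 1 / \<mu> ^ card (K y)" unfolding c0_def using mu1
        by (intro divide_left_mono) auto
      thus ?thesis using inner[OF y] True by simp
    next
      case False
      have "1 / \<mu> ^ card (K y) \<ge> 0" using mu1 by simp
      hence "(\<Sum>B\<in>F y. q ^ card B) \<le> 1" using inner[OF y] by linarith
      thus ?thesis using False by simp
    qed
    have finO: "finite (oc ` U)" using finU by simp
    have "(\<Sum>y\<in>oc ` U. \<Sum>B\<in>F y. q ^ card B) \<le> (\<Sum>y\<in>oc ` U. 1 - (if y \<in> S then c0 else 0))"
      using inner2 by (intro sum_mono) auto
    also have "\<dots> = real (card (oc ` U)) - c0 * real (card S)"
    proof -
      have "(\<Sum>y\<in>oc ` U. (if y \<in> S then c0 else 0)) = (\<Sum>y\<in>S. c0)"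
        using SU finO by (simp add: sum.If_cases Int_absorb2 Int_commute)
      thus ?thesis by (simp add: sum_subtractf)
    qed
    finally have main: "(1 + q) ^ n - 1 \<le> real (card (oc ` U)) - c0 * real (card S)"
      using total group by simp
    have cardO: "card (oc ` U) \<le> 2 ^ m"
    proof -
      have "card (oc ` U) \<le> card (Pow {..<m})"
      proof (rule card_inj_on_le[where f = "\<lambda>y. {i. y i}"])
        show "inj_on (\<lambda>y. {i. y i}) (oc ` U)"
          by (rule inj_onI) (simp add: set_eq_iff fun_eq_iff)
        show "(\<lambda>y. {i. y i}) ` (oc ` U) \<subseteq> Pow {..<m}"
          unfolding oc_def gt_outcome_def by auto
      qed simp
      thus ?thesis by (simp add: card_Pow)
    qed
    have cardS: "real n \<le> t * real (card S)"
    proof -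
      have sub: "{..<n} \<subseteq> (\<Union>y\<in>S. K y)"
      proof
        fix j assume "j \<in> {..<n}"
        hence j: "j < n" by simp
        have y: "oc {j} \<in> oc ` U" using j unfolding U_def by auto
        have "{j} \<subseteq> K (oc {j})" using K[OF y] singK[OF j] by blast
        thus "j \<in> (\<Union>y\<in>S. K y)" using j unfolding S_def by auto
      qed
      have finS: "finite S" unfolding S_def by simp
      have "card {..<n} \<le> card (\<Union>y\<in>S. K y)"
      proof (rule card_mono[OF _ sub])
        show "finite (\<Union>y\<in>S. K y)"
        proof (rule finite_UN_I[OF finS])
          fix y assume "y \<in> S"
          hence yU: "y \<in> oc ` U" using SU by blast
          have "K y \<in> U" using K[OF yU] FU by blast
          hence "K y \<subseteq> {..<n}" unfolding U_def by blast
          thus "finite (K y)" by (rule finite_subset[OF _ finite_lessThan])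
        qed
      qed
      also have "\<dots> \<le> (\<Sum>y\<in>S. card (K y))" by (rule card_UN_le[OF finS])
      finally have "n \<le> (\<Sum>y\<in>S. card (K y))" by simp
      hence "real n \<le> real (\<Sum>y\<in>S. card (K y))" by (simp only: of_nat_le_iff)
      also have "\<dots> = (\<Sum>y\<in>S. real (card (K y)))" by (rule of_nat_sum)
      also have "\<dots> \<le> (\<Sum>y\<in>S. t)" using Ksmall by (intro sum_mono) auto
      finally show ?thesis by (simp add: mult.commute)
    qed
    have "c0 * real (card S) \<ge> 1"
    proof -
      have "t * \<mu> powr t \<le> t * real (card S) * 1" using nbig cardS by simp
      hence "\<mu> powr t \<le> real (card S)" using t1 by simp
      thus ?thesis unfolding c0_def using mu1 by (simp add: field_simps)
    qed
    moreover have "real (card (oc ` U)) \<le> 2 ^ m"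
    proof -
      have "real (card (oc ` U)) \<le> real ((2::nat) ^ m)" using cardO by (simp only: of_nat_le_iff)
      thus ?thesis by simp
    qed
    ultimately have pw: "(1 + q) ^ n \<le> 2 ^ m" using main by linarith
    have "real n * log 2 (1 + q) = log 2 ((1 + q) ^ n)" using q0 by (simp add: log_nat_power)
    also have "\<dots> \<le> log 2 (2 ^ m)" using pw q0 by (subst log_le_cancel_iff) auto
    also have "\<dots> = real m" by (simp add: log_nat_power)
    finally have "real n * log 2 (1 + q) \<le> real m" .
    moreover have "real n * target \<le> real n * log 2 (1 + q)" using ent by (intro mult_left_mono) auto
    ultimately show "real m \<ge> real n * (bin_entropy (1 / \<Delta> ^ 4) - 1 / \<Delta> ^ 2 * bin_entropy (1 / \<Delta> ^ 2))"
      unfolding target_def by linarith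
  qed
qed
end
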